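(* Let $N=2$, $\alpha\in(0,1)$, and suppose both bidders have the equal revenue distribution $F(v)=1-\frac{\alpha}{v}$ for $\alpha\le v<1$ and $F(1)=1$ (so $F(v)=0$ for $v<\alpha$ and $F$ has mass $\alpha$ at $1$). Then the Second Price Auction with Uniformly Distributed Reserves is a maxmin auction among DSIC and EPIR mechanisms, and the independent joint distribution $F\times F$ is a minimax correlation structure: together they form a saddle point, i.e. $U(M^*,\pi)\ge U(M^*,F\times F)\ge U(M,F\times F)$ for all $\pi\in\Pi(F)$ and all DSIC and EPIR mechanisms $M$, where $M^*$ is the Second Price Auction with Uniformly Distributed Reserves.
   Context: A single indivisible good is sold to two bidders with private values $v_1,v_2\in[0,1]$, each with marginal cdf $F$. $\Pi(F)$ is the set of probability measures on $[0,1]^2$ with both marginals $F$. A mechanism $(q,t)$: $q:[0,1]^2\to[0,1]^2$ with $q_1+q_2\le1$, $t:[0,1]^2\to\mathbb{R}^2$; DSIC: $v_iq_i(v)-t_i(v)\ge v_iq_i(v_i',v_{-i})-t_i(v_i',v_{-i})$ for all $i,v,v_i'$; EPIR: $v_iq_i(v)-t_i(v)\ge0$. $U((q,t),\pi)=\int(t_1+t_2)\,d\pi$; a maxmin auction maximizes $\inf_{\pi\in\Pi(F)}U((q,t),\pi)$ over DSIC and EPIR mechanisms. Second Price Auction with Uniformly Distributed Reserves: if $v_1>v_2$, $q_1=v_1$, $q_2=0$, $t_1=\frac{v_1^2+v_2^2}2$, $t_2=0$ (symmetrically if $v_2>v_1$); if $v_1=v_2=v$, $q_1=q_2=\frac v2$,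 $t_1=t_2=\frac{v^2}2$. *)

theory Defs
  imports "HOL-Probability.Probability"
begin

text \<open>Values v = (v1, v2) in [0,1]^2. A mechanism is a pair (q, t) of maps
  from value profiles to allocation pairs (q1, q2) and payment pairs (t1, t2).\<close>

type_synonym mechanism = "(real \<times> real \<Rightarrow> real \<times> real) \<times> (real \<times> real \<Rightarrow> real \<times> real)"

definition box01 :: "(real \<times> real) set" where
  "box01 = {0..1} \<times> {0..1}"

definition Fcdf :: "real \<Rightarrow> real \<Rightarrow> real" where
  "Fcdf \<alpha> v = (if v < \<alpha> then 0 else if v < 1 then 1 - \<alpha> / v else 1)"

definition Fmeas :: "real \<Rightarrow> real measure" where
  "Fmeas \<alpha> = interval_measure (Fcdf \<alpha>)"

definition PiF :: "real \<Rightarrow> (real \<times> real) measure set" where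
  "PiF \<alpha> = {\<pi>. prob_space \<pi> \<and> sets \<pi> = sets (borel :: (real \<times> real) measure)
              \<and> emeasure \<pi> box01 = 1
              \<and> distr \<pi> borel fst = Fmeas \<alpha> \<and> distr \<pi> borel snd = Fmeas \<alpha>}"

definition indepF :: "real \<Rightarrow> (real \<times> real) measure" where
  "indepF \<alpha> = Fmeas \<alpha> \<Otimes>\<^sub>M Fmeas \<alpha>"

definition feasible :: "mechanism \<Rightarrow> bool" where
  "feasible M = (\<forall>v\<in>box01. 0 \<le> fst (fst M v) \<and> 0 \<le> snd (fst M v)
                  \<and> fst (fst M v) \<le> 1 \<and> snd (fst M v) \<le> 1
                  \<and> fst (fst M v) + snd (fst M v) \<le> 1)"

definition DSIC :: "mechanism \<Rightarrow> bool" where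
  "DSIC M = (\<forall>v1\<in>{0..1}. \<forall>v2\<in>{0..1}. \<forall>w\<in>{0..1}.
      v1 * fst (fst M (v1, v2)) - fst (snd M (v1, v2))
        \<ge> v1 * fst (fst M (w, v2)) - fst (snd M (w, v2))
    \<and> v2 * snd (fst M (v1, v2)) - snd (snd M (v1, v2))
        \<ge> v2 * snd (fst M (v1, w)) - snd (snd M (v1, w)))"

definition EPIR :: "mechanism \<Rightarrow> bool" where
  "EPIR M = (\<forall>v1\<in>{0..1}. \<forall>v2\<in>{0..1}.
      v1 * fst (fst M (v1, v2)) - fst (snd M (v1, v2)) \<ge> 0
    \<and> v2 * snd (fst M (v1, v2)) - snd (snd M (v1, v2)) \<ge> 0)"

definition revenue :: "mechanism \<Rightarrow> real \<times> real \<Rightarrow> real" where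
  "revenue M v = fst (snd M v) + snd (snd M v)"

definition U :: "mechanism \<Rightarrow> (real \<times> real) measure \<Rightarrow> real" where
  "U M \<pi> = (\<integral>v. revenue M v \<partial>\<pi>)"

definition SPA_UR :: mechanism where
  "SPA_UR = ((\<lambda>(v1, v2). if v1 > v2 then (v1, 0) else if v2 > v1 then (0, v2)
                         else (v1 / 2, v1 / 2)),
             (\<lambda>(v1, v2). if v1 > v2 then ((v1^2 + v2^2) / 2, 0)
                         else if v2 > v1 then (0, (v1^2 + v2^2) / 2)
                         else (v1^2 / 2, v1^2 / 2)))"

end

theory Submission
  imports Defs
begin

lemma sets_Fmeas[simp, measurable_cong]: "sets (Fmeas \<alpha>) = sets borel"
  by (simp add: Fmeas_def)

lemma space_Fmeas[simp]: "space (Fmeas \<alpha>) = UNIV"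
  by (simp add: Fmeas_def)

locale ER =
  fixes \<alpha> :: real
  assumes a0: "0 < \<alpha>" and a1: "\<alpha> < 1"
begin

lemma Fcdf_mono: "x \<le> y \<Longrightarrow> Fcdf \<alpha> x \<le> Fcdf \<alpha> y"
  using a0 a1 by (auto simp: Fcdf_def field_simps frac_le)

lemma Fcdf_rc: "continuous (at_right a) (Fcdf \<alpha>)"
proof -
  consider "a < \<alpha>" | "\<alpha> \<le> a" "a < 1" | "1 \<le> a" by linarith
  then show ?thesis
  proof cases
    case 1
    have ev: "eventually (\<lambda>x. x \<in> {a<..<\<alpha>}) (at_right a)" using 1 by (rule eventually_at_right_real)
    have "((\<lambda>x. 0) \<longlongrightarrow> Fcdf \<alpha> a) (at_right a)" using 1 by (simp add: Fcdf_def)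
    moreover have "eventually (\<lambda>x. 0 = Fcdf \<alpha> x) (at_right a)"
      using ev by eventually_elim (simp add: Fcdf_def)
    ultimately have "(Fcdf \<alpha> \<longlongrightarrow> Fcdf \<alpha> a) (at_right a)"
      by (rule Lim_transform_eventually)
    then show ?thesis by (simp add: continuous_within)
  next
    case 2
    have ev: "eventually (\<lambda>x. x \<in> {a<..<1}) (at_right a)" using 2 by (intro eventually_at_right_real)
    have "((\<lambda>x. 1 - \<alpha> / x) \<longlongrightarrow> 1 - \<alpha> / a) (at_right a)"
      using 2 a0 by (intro tendsto_intros) auto
    then have "((\<lambda>x. 1 - \<alpha> / x) \<longlongrightarrow> Fcdf \<alpha> a) (at_right a)" using 2 by (simp add: Fcdf_def)
    moreover have "eventually (\<lambda>x. 1 - \<alpha> / x = Fcdf \<alpha> x) (at_right a)"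
      using ev by eventually_elim (use 2 in \<open>simp add: Fcdf_def\<close>)
    ultimately have "(Fcdf \<alpha> \<longlongrightarrow> Fcdf \<alpha> a) (at_right a)"
      by (rule Lim_transform_eventually)
    then show ?thesis by (simp add: continuous_within)
  next
    case 3
    have ev: "eventually (\<lambda>x. x \<in> {a<..<a+1}) (at_right a)" by (intro eventually_at_right_real) simp
    have "((\<lambda>x. 1) \<longlongrightarrow> Fcdf \<alpha> a) (at_right a)" using 3 a1 by (simp add: Fcdf_def)
    moreover have "eventually (\<lambda>x. 1 = Fcdf \<alpha> x) (at_right a)"
      using ev by eventually_elim (use 3 a1 in \<open>simp add: Fcdf_def\<close>)
    ultimately have "(Fcdf \<alpha> \<longlongrightarrow> Fcdf \<alpha> a) (at_right a)"
      by (rule Lim_transform_eventually)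
    then show ?thesis by (simp add: continuous_within)
  qed
qed

lemma Fcdf_bot: "(Fcdf \<alpha> \<longlongrightarrow> 0) at_bot"
proof -
  have "eventually (\<lambda>x. Fcdf \<alpha> x = 0) at_bot"
    unfolding eventually_at_bot_linorder by (intro exI[of _ "\<alpha> - 1"]) (auto simp: Fcdf_def)
  then show ?thesis by (rule tendsto_eventually)
qed

lemma Fcdf_top: "(Fcdf \<alpha> \<longlongrightarrow> 1) at_top"
proof -
  have "eventually (\<lambda>x. Fcdf \<alpha> x = 1) at_top"
    unfolding eventually_at_top_linorder using a1 by (intro exI[of _ "1"]) (auto simp: Fcdf_def)
  then show ?thesis by (rule tendsto_eventually)
qed

lemma Fmeas_rd: "real_distribution (Fmeas \<alpha>)"
  unfolding Fmeas_def
  by (rule real_distribution_interval_measure[OF Fcdf_mono Fcdf_rc Fcdf_bot Fcdf_top])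

lemma Fmeas_prob: "prob_space (Fmeas \<alpha>)"
  using Fmeas_rd real_distribution_def by blast

lemma measure_Fmeas_Ioc: "a \<le> b \<Longrightarrow> measure (Fmeas \<alpha>) {a<..b} = Fcdf \<alpha> b - Fcdf \<alpha> a"
  unfolding Fmeas_def by (rule measure_interval_measure_Ioc[OF _ Fcdf_mono Fcdf_rc])

lemma cdf_Fmeas: "cdf (Fmeas \<alpha>) = Fcdf \<alpha>"
  unfolding Fmeas_def by (rule cdf_interval_measure[OF Fcdf_mono Fcdf_rc Fcdf_bot])

lemma measure_Fmeas_1: "measure (Fmeas \<alpha>) {1} = \<alpha>"
proof -
  interpret real_distribution "Fmeas \<alpha>" by (rule Fmeas_rd)
  have l1: "(Fcdf \<alpha> \<longlongrightarrow> measure (Fmeas \<alpha>) {..<1}) (at_left 1)"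
    using cdf_at_left[of 1] by (simp add: cdf_Fmeas)
  have ev: "eventually (\<lambda>x. x \<in> {\<alpha><..<1}) (at_left 1)" using a1 by (intro eventually_at_left_real)
  have "((\<lambda>x. 1 - \<alpha> / x) \<longlongrightarrow> 1 - \<alpha> / 1) (at_left 1)"
    by (intro tendsto_intros) auto
  moreover have "eventually (\<lambda>x. 1 - \<alpha> / x = Fcdf \<alpha> x) (at_left 1)"
    using ev by eventually_elim (auto simp: Fcdf_def)
  ultimately have l2: "(Fcdf \<alpha> \<longlongrightarrow> 1 - \<alpha>) (at_left 1)"
    by (auto dest: Lim_transform_eventually)
  have m1: "measure (Fmeas \<alpha>) {..<1} = 1 - \<alpha>"
    using tendsto_unique[OF _ l1 l2] by simp
  have m2: "measure (Fmeas \<alpha>) {..1} = 1"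
    using cdf_Fmeas unfolding cdf_def by (metis Fcdf_def a1 less_irrefl not_less_iff_gr_or_eq)
  have e: "{..1::real} = {..<1} \<union> {1}" by auto
  have "measure (Fmeas \<alpha>) ({..<1} \<union> {1}) = measure (Fmeas \<alpha>) {..<1} + measure (Fmeas \<alpha>) {1}"
    by (rule finite_measure_Union) auto
  then have "measure (Fmeas \<alpha>) {..1} = measure (Fmeas \<alpha>) {..<1} + measure (Fmeas \<alpha>) {1}"
    by (simp only: e)
  with m1 m2 show ?thesis by simp
qed

lemma measure_Fmeas_box: "measure (Fmeas \<alpha>) {\<alpha><..1} = 1"
  using measure_Fmeas_Ioc[of \<alpha> 1] a0 a1 by (simp add: Fcdf_def)

lemma AE_Fmeas: "AE x in Fmeas \<alpha>. x \<in> {\<alpha><..1}"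
  using prob_space.AE_prob_1[OF Fmeas_prob measure_Fmeas_box] .

end

lemma rev_SPA: "revenue SPA_UR v = (fst v ^ 2 + snd v ^ 2) / 2"
  by (cases v) (auto simp: revenue_def SPA_UR_def power2_eq_square)

lemma sets_PiF: assumes "\<pi> \<in> PiF \<alpha>" shows "sets \<pi> = sets (borel \<Otimes>\<^sub>M borel)"
proof -
  have e: "sets (borel \<Otimes>\<^sub>M borel) = sets (borel :: (real \<times> real) measure)" by (simp only: borel_prod)
  have "sets \<pi> = sets (borel :: (real \<times> real) measure)" using assms by (simp add: PiF_def)
  then show ?thesis using e by metis
qed

lemma meas_cong_pair:
  assumes "sets \<pi> = sets (borel \<Otimes>\<^sub>M borel)" "f \<in> measurable (borel \<Otimes>\<^sub>M borel) N"
  shows "f \<in> measurable \<pi> N"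
  using measurable_cong_sets[OF assms(1) refl, of N] assms(2) by blast

lemma meas_fst_sq: "sets \<pi> = sets (borel \<Otimes>\<^sub>M borel) \<Longrightarrow> (\<lambda>v::real\<times>real. fst v ^ 2) \<in> borel_measurable \<pi>"
  by (erule meas_cong_pair) measurable
lemma meas_snd_sq: "sets \<pi> = sets (borel \<Otimes>\<^sub>M borel) \<Longrightarrow> (\<lambda>v::real\<times>real. snd v ^ 2) \<in> borel_measurable \<pi>"
  by (erule meas_cong_pair) measurable

lemma U_SPA_PiF:
  assumes "\<pi> \<in> PiF \<alpha>"
  shows "U SPA_UR \<pi> = (\<integral>x. x ^ 2 \<partial>Fmeas \<alpha>)"
proof -
  have P: "prob_space \<pi>" and S: "sets \<pi> = sets (borel \<Otimes>\<^sub>M borel)"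
    and B: "emeasure \<pi> box01 = 1" and D1: "distr \<pi> borel fst = Fmeas \<alpha>" and D2: "distr \<pi> borel snd = Fmeas \<alpha>"
    using assms sets_PiF[OF assms] by (auto simp: PiF_def)
  interpret prob_space \<pi> by (rule P)
  have bs: "box01 \<in> sets \<pi>" using S unfolding box01_def by simp
  have "prob box01 = 1" using B by (simp add: emeasure_eq_measure)
  then have ae: "AE v in \<pi>. v \<in> box01" by (rule AE_prob_1)
  have i1: "integrable \<pi> (\<lambda>v. fst v ^ 2)"
    by (rule integrable_const_bound[where B=1]) (use ae meas_fst_sq[OF S] in \<open>auto simp: box01_def abs_le_square_iff power_le_one\<close>)
  have i2: "integrable \<pi> (\<lambda>v. snd v ^ 2)"
    by (rule integrable_const_bound[where B=1]) (use ae meas_snd_sq[OF S] in \<open>auto simp: box01_def abs_le_square_iff power_le_one\<close>)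
  have mf: "fst \<in> measurable \<pi> borel" using S by (rule meas_cong_pair) simp
  have ms: "snd \<in> measurable \<pi> borel" using S by (rule meas_cong_pair) simp
  have e1: "(\<integral>v. fst v ^ 2 \<partial>\<pi>) = (\<integral>x. x ^ 2 \<partial>Fmeas \<alpha>)"
    using integral_distr[OF mf, of "\<lambda>x. x ^ 2"] D1 by simp
  have e2: "(\<integral>v. snd v ^ 2 \<partial>\<pi>) = (\<integral>x. x ^ 2 \<partial>Fmeas \<alpha>)"
    using integral_distr[OF ms, of "\<lambda>x. x ^ 2"] D2 by simp
  have "U SPA_UR \<pi> = (\<integral>v. (fst v ^ 2 + snd v ^ 2) / 2 \<partial>\<pi>)"
    by (simp add: U_def rev_SPA)
  also have "\<dots> = ((\<integral>v. fst v ^ 2 \<partial>\<pi>) + (\<integral>v. snd v ^ 2 \<partial>\<pi>)) / 2"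
    using i1 i2 by simp
  finally show ?thesis using e1 e2 by simp
qed

context ER begin

lemma pair_Fmeas: "pair_prob_space (Fmeas \<alpha>) (Fmeas \<alpha>)"
  using Fmeas_prob by (simp add: pair_prob_space_def pair_sigma_finite_def prob_space_imp_sigma_finite)

lemma indepF_PiF: "indepF \<alpha> \<in> PiF \<alpha>"
proof -
  interpret F: prob_space "Fmeas \<alpha>" by (rule Fmeas_prob)
  interpret P: pair_prob_space "Fmeas \<alpha>" "Fmeas \<alpha>" by (rule pair_Fmeas)
  have S: "sets (indepF \<alpha>) = sets (borel :: (real \<times> real) measure)"
    unfolding indepF_def borel_prod[symmetric] by (rule sets_pair_measure_cong) simp_all
  have "measure (Fmeas \<alpha>) {0..1} = 1"
  proof -
    have "measure (Fmeas \<alpha>) {\<alpha><..1} \<le> measure (Fmeas \<alpha>) {0..1}"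
      using a0 by (intro F.finite_measure_mono) auto
    then show ?thesis using measure_Fmeas_box F.prob_le_1[of "{0..1}"] by simp
  qed
  then have "emeasure (Fmeas \<alpha>) {0..1} = 1" by (simp add: F.emeasure_eq_measure)
  then have B: "emeasure (indepF \<alpha>) box01 = 1"
    unfolding indepF_def box01_def by (subst F.emeasure_pair_measure_Times) auto
  have D1: "distr (indepF \<alpha>) borel fst = Fmeas \<alpha>"
  proof -
    have "distr (indepF \<alpha>) borel fst = distr (indepF \<alpha>) (Fmeas \<alpha>) fst"
      by (rule distr_cong) auto
    also have "\<dots> = Fmeas \<alpha>" unfolding indepF_def by (rule F.distr_pair_fst)
    finally show ?thesis .
  qed
  have D2: "distr (indepF \<alpha>) borel snd = Fmeas \<alpha>"
  proof (rule measure_eqI)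
    show "sets (distr (indepF \<alpha>) borel snd) = sets (Fmeas \<alpha>)" by simp
    fix A assume A: "A \<in> sets (distr (indepF \<alpha>) borel snd)"
    then have A': "A \<in> sets borel" by simp
    have "emeasure (distr (indepF \<alpha>) borel snd) A = emeasure (indepF \<alpha>) (UNIV \<times> A)"
      using A' S by (subst emeasure_distr) (auto simp: measurable_cong_sets[OF S refl] indepF_def space_pair_measure intro!: arg_cong2[where f=emeasure])
    also have "\<dots> = emeasure (Fmeas \<alpha>) A"
      using A' unfolding indepF_def by (subst F.emeasure_pair_measure_Times) (auto simp: F.emeasure_space_1[simplified])
    finally show "emeasure (distr (indepF \<alpha>) borel snd) A = emeasure (Fmeas \<alpha>) A" .
  qed
  have "prob_space (indepF \<alpha>)" unfolding indepF_def by (rule P.prob_space_axioms)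
  with S B D1 D2 show ?thesis by (simp add: PiF_def)
qed

end

lemma telescope:
  fixes Fv T Q :: "nat \<Rightarrow> real"
  assumes F0: "Fv 0 = 0" and Fn: "Fv n = 1"
    and step: "\<And>m. m < n \<Longrightarrow> (1 - Fv m) * (T (Suc m) - T m) \<le> C * (Q (Suc m) - Q m)"
    and T0: "T 0 \<le> C * Q 0"
  shows "(\<Sum>k<n. (Fv (Suc k) - Fv k) * T (Suc k)) \<le> C * Q n"
proof -
  define S where "S m = (\<Sum>k<m. (Fv (Suc k) - Fv k) * T (Suc k)) + (1 - Fv m) * T m" for m
  have "m \<le> n \<Longrightarrow> S m \<le> C * Q m" for m
  proof (induction m)
    case 0 then show ?case using F0 T0 by (simp add: S_def)
  next
    case (Suc m)
    have "S (Suc m) = S m + (1 - Fv m) * (T (Suc m) - T m)"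
      by (simp add: S_def algebra_simps)
    also have "\<dots> \<le> C * Q m + C * (Q (Suc m) - Q m)"
      using Suc step[of m] by (intro add_mono) auto
    finally show ?case by (simp add: algebra_simps)
  qed
  from this[of n] show ?thesis using Fn by (simp add: S_def)
qed

lemma telescope_low:
  fixes Fv x :: "nat \<Rightarrow> real"
  assumes F0: "Fv 0 = 0" and Fn: "Fv n = 1" and n0: "0 < n"
    and step: "\<And>m. Suc m < n \<Longrightarrow> (1 - Fv (Suc m)) * (x (Suc m) ^ 2 - x m ^ 2) \<ge> \<delta>"
  shows "(\<Sum>k<n. (Fv (Suc k) - Fv k) * x k ^ 2) \<ge> x 0 ^ 2 + real (n - 1) * \<delta>"
proof -
  define S where "S m = (\<Sum>k<m. (Fv (Suc k) - Fv k) * x k ^ 2) + (1 - Fv m) * x m ^ 2" for m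
  have Sstep: "S (Suc m) = S m + (1 - Fv (Suc m)) * (x (Suc m) ^ 2 - x m ^ 2)" for m
    by (simp add: S_def algebra_simps)
  have "m < n \<Longrightarrow> S m \<ge> x 0 ^ 2 + real m * \<delta>" for m
  proof (induction m)
    case 0 then show ?case using F0 by (simp add: S_def)
  next
    case (Suc m)
    then show ?case using step[of m] Sstep[of m] by (simp add: algebra_simps)
  qed
  from this[of "n - 1"] n0 have "S (n - 1) \<ge> x 0 ^ 2 + real (n - 1) * \<delta>" by simp
  moreover have "S n = S (n - 1)" using Sstep[of "n - 1"] n0 Fn by simp
  ultimately show ?thesis using Fn by (simp add: S_def)
qed

definition gstep :: "real \<Rightarrow> nat \<Rightarrow> real" where
  "gstep \<alpha> n = (1 - \<alpha>) / real n"

definition grid :: "real \<Rightarrow> nat \<Rightarrow> nat \<Rightarrow> real" where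
  "grid \<alpha> n k = \<alpha> + real k * gstep \<alpha> n"

definition cell :: "real \<Rightarrow> nat \<Rightarrow> nat \<Rightarrow> real set" where
  "cell \<alpha> n k = {grid \<alpha> n k <.. grid \<alpha> n (Suc k)}"

locale ERn = ER +
  fixes n :: nat
  assumes n0: "0 < n"
begin

abbreviation "d \<equiv> gstep \<alpha> n"
abbreviation "s \<equiv> grid \<alpha> n"

lemma d_pos: "0 < d" using a1 n0 by (simp add: gstep_def)
lemma nd: "real n * d = 1 - \<alpha>" using n0 by (simp add: gstep_def)

lemma s_0[simp]: "s 0 = \<alpha>" by (simp add: grid_def)
lemma s_n[simp]: "s n = 1" using nd by (simp add: grid_def)
lemma s_Suc: "s (Suc k) = s k + d" by (simp add: grid_def algebra_simps)
lemma s_ge: "\<alpha> \<le> s k" using d_pos by (simp add: grid_def)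
lemma s_mono: "j \<le> k \<Longrightarrow> s j \<le> s k" using d_pos by (simp add: grid_def mult_right_mono)
lemma s_le1: "k \<le> n \<Longrightarrow> s k \<le> 1" using s_mono[of k n] by simp
lemma s_lt1: "k < n \<Longrightarrow> s k < 1"
proof -
  assume "k < n"
  then have "s (Suc k) \<le> 1" by (intro s_le1) simp
  then show ?thesis using d_pos s_Suc[of k] by simp
qed
lemma s_pos: "0 < s k" using s_ge[of k] a0 by simp

lemma Fv_lt: "k < n \<Longrightarrow> Fcdf \<alpha> (s k) = 1 - \<alpha> / s k"
  using s_ge[of k] s_lt1[of k] by (simp add: Fcdf_def)
lemma Fv_0: "Fcdf \<alpha> (s 0) = 0" using a0 a1 by (simp add: Fcdf_def)
lemma Fv_n: "Fcdf \<alpha> (s n) = 1" using a0 a1 by (simp add: Fcdf_def)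

lemma cell_iff: "x \<in> cell \<alpha> n k \<longleftrightarrow> real k < (x - \<alpha>) / d \<and> (x - \<alpha>) / d \<le> real k + 1"
proof -
  have "x \<in> cell \<alpha> n k \<longleftrightarrow> real k * d < x - \<alpha> \<and> x - \<alpha> \<le> (real k + 1) * d"
    by (auto simp: cell_def grid_def algebra_simps)
  also have "\<dots> \<longleftrightarrow> real k < (x - \<alpha>) / d \<and> (x - \<alpha>) / d \<le> real k + 1"
    using d_pos by (simp add: pos_less_divide_eq pos_divide_le_eq)
  finally show ?thesis .
qed

lemma cell_exists:
  assumes "x \<in> {\<alpha><..1}"
  shows "\<exists>k<n. x \<in> cell \<alpha> n k \<and> (\<forall>j. x \<in> cell \<alpha> n j \<longleftrightarrow> j = k)"
proof -
  define y where "y = (x - \<alpha>) / d"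
  have y0: "0 < y" using assms d_pos by (simp add: y_def)
  have yn: "y \<le> real n" using assms d_pos nd by (simp add: y_def divide_le_eq algebra_simps)
  define k where "k = nat (ceiling y) - 1"
  have c1: "1 \<le> ceiling y" using y0 by simp
  have ki: "int k + 1 = ceiling y" unfolding k_def using c1 by linarith
  have kk: "real k + 1 = of_int (ceiling y)"
  proof -
    have "real_of_int (int k + 1) = of_int (ceiling y)" using ki by simp
    then show ?thesis by simp
  qed
  have iff: "(real j < y \<and> y \<le> real j + 1) \<longleftrightarrow> j = k" for j
  proof -
    have "(real j < y \<and> y \<le> real j + 1) \<longleftrightarrow> ceiling y = int j + 1"
      by (simp add: ceiling_eq_iff algebra_simps)
    also have "\<dots> \<longleftrightarrow> j = k" using ki by auto
    finally show ?thesis .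
  qed
  have "ceiling y \<le> int n" using yn by (simp add: ceiling_le_iff)
  then have "k < n" using ki by linarith
  moreover have "\<forall>j. x \<in> cell \<alpha> n j \<longleftrightarrow> j = k" using iff by (simp add: cell_iff y_def)
  ultimately show ?thesis by blast
qed

lemma sum_cells:
  assumes "x \<in> {\<alpha><..1}"
  obtains k where "k < n" "x \<in> cell \<alpha> n k"
    "\<And>g. (\<Sum>j<n. indicator (cell \<alpha> n j) x * g j) = (g k :: real)"
proof -
  obtain k where k: "k < n" "x \<in> cell \<alpha> n k" "\<forall>j. x \<in> cell \<alpha> n j \<longleftrightarrow> j = k"
    using cell_exists[OF assms] by blast
  have "(\<Sum>j<n. indicator (cell \<alpha> n j) x * g j) = (g k :: real)" for g
  proof -
    have "(\<Sum>j<n. indicator (cell \<alpha> n j) x * g j) = (\<Sum>j<n. if j = k then g j else 0)"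
      using k(3) by (intro sum.cong) (auto simp: indicator_def)
    also have "\<dots> = g k" using k(1) by simp
    finally show ?thesis .
  qed
  with k show ?thesis using that by blast
qed

lemma integral_cells:
  "(\<integral>x. (\<Sum>j<n. indicator (cell \<alpha> n j) x * c j) \<partial>Fmeas \<alpha>)
     = (\<Sum>j<n. (Fcdf \<alpha> (s (Suc j)) - Fcdf \<alpha> (s j)) * c j)"
proof -
  interpret F: prob_space "Fmeas \<alpha>" by (rule Fmeas_prob)
  have "(\<integral>x. (\<Sum>j<n. indicator (cell \<alpha> n j) x * c j) \<partial>Fmeas \<alpha>)
      = (\<Sum>j<n. (\<integral>x. indicator (cell \<alpha> n j) x * c j \<partial>Fmeas \<alpha>))"
  proof (rule Bochner_Integration.integral_sum)
    fix j
    have "integrable (Fmeas \<alpha>) (indicator (cell \<alpha> n j) :: real \<Rightarrow> real)"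
      by (rule integrable_real_indicator) (auto simp: cell_def F.emeasure_eq_measure)
    then show "integrable (Fmeas \<alpha>) (\<lambda>x. indicator (cell \<alpha> n j) x * c j)"
      by (rule integrable_mult_left)
  qed
  also have "\<dots> = (\<Sum>j<n. (Fcdf \<alpha> (s (Suc j)) - Fcdf \<alpha> (s j)) * c j)"
  proof (rule sum.cong[OF refl])
    fix j
    have "measure (Fmeas \<alpha>) (cell \<alpha> n j) = Fcdf \<alpha> (s (Suc j)) - Fcdf \<alpha> (s j)"
      unfolding cell_def by (rule measure_Fmeas_Ioc) (simp add: s_mono)
    then show "(\<integral>x. indicator (cell \<alpha> n j) x * c j \<partial>Fmeas \<alpha>) = (Fcdf \<alpha> (s (Suc j)) - Fcdf \<alpha> (s j)) * c j"
      by simp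
  qed
  finally show ?thesis .
qed

end

locale Mech = ERn +
  fixes M :: mechanism
  assumes feas: "feasible M" and dsic: "DSIC M" and epir: "EPIR M"
    and rint: "integrable (indepF \<alpha>) (revenue M)"
begin

abbreviation "q1 x y \<equiv> fst (fst M (x, y))"
abbreviation "q2 x y \<equiv> snd (fst M (x, y))"
abbreviation "t1 x y \<equiv> fst (snd M (x, y))"
abbreviation "t2 x y \<equiv> snd (snd M (x, y))"

lemma ic1:
  assumes "x \<in> {0..1}" "y \<in> {0..1}" "z \<in> {0..1}"
  shows "t1 y z - t1 x z \<le> y * (q1 y z - q1 x z)"
proof -
  have "y * q1 y z - t1 y z \<ge> y * q1 x z - t1 x z"
    using dsic assms unfolding DSIC_def by blast
  then show ?thesis by (simp add: algebra_simps)
qed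

lemma ic2:
  assumes "x \<in> {0..1}" "y \<in> {0..1}" "z \<in> {0..1}"
  shows "t2 z y - t2 z x \<le> y * (q2 z y - q2 z x)"
proof -
  have "y * q2 z y - t2 z y \<ge> y * q2 z x - t2 z x"
    using dsic assms unfolding DSIC_def by blast
  then show ?thesis by (simp add: algebra_simps)
qed

lemma q1_mono:
  assumes "x \<in> {0..1}" "y \<in> {0..1}" "z \<in> {0..1}" "x \<le> y"
  shows "q1 x z \<le> q1 y z"
proof (cases "x = y")
  case False
  have a: "t1 y z - t1 x z \<le> y * (q1 y z - q1 x z)" using ic1 assms by blast
  have b: "t1 x z - t1 y z \<le> x * (q1 x z - q1 y z)" using ic1 assms by blast
  have "0 \<le> (y - x) * (q1 y z - q1 x z)" using a b by (simp add: algebra_simps)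
  moreover have "0 < y - x" using False assms by simp
  ultimately show ?thesis by (simp add: zero_le_mult_iff)
qed simp

lemma q2_mono:
  assumes "x \<in> {0..1}" "y \<in> {0..1}" "z \<in> {0..1}" "x \<le> y"
  shows "q2 z x \<le> q2 z y"
proof (cases "x = y")
  case False
  have a: "t2 z y - t2 z x \<le> y * (q2 z y - q2 z x)" using ic2 assms by blast
  have b: "t2 z x - t2 z y \<le> x * (q2 z x - q2 z y)" using ic2 assms by blast
  have "0 \<le> (y - x) * (q2 z y - q2 z x)" using a b by (simp add: algebra_simps)
  moreover have "0 < y - x" using False assms by simp
  ultimately show ?thesis by (simp add: zero_le_mult_iff)
qed simp

lemma t1_mono:
  assumes "x \<in> {0..1}" "y \<in> {0..1}" "z \<in> {0..1}" "x \<le> y"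
  shows "t1 x z \<le> t1 y z"
proof -
  have b: "t1 x z - t1 y z \<le> x * (q1 x z - q1 y z)" using ic1 assms by blast
  have "0 \<le> x * (q1 y z - q1 x z)" using q1_mono[OF assms] assms by simp
  then show ?thesis using b by (simp add: algebra_simps)
qed

lemma t2_mono:
  assumes "x \<in> {0..1}" "y \<in> {0..1}" "z \<in> {0..1}" "x \<le> y"
  shows "t2 z x \<le> t2 z y"
proof -
  have b: "t2 z x - t2 z y \<le> x * (q2 z x - q2 z y)" using ic2 assms by blast
  have "0 \<le> x * (q2 z y - q2 z x)" using q2_mono[OF assms] assms by simp
  then show ?thesis using b by (simp add: algebra_simps)
qed

lemma feas1: "x \<in> {0..1} \<Longrightarrow> y \<in> {0..1} \<Longrightarrow> 0 \<le> q1 x y \<and> q1 x y \<le> 1"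
  using feas unfolding feasible_def box01_def by auto
lemma feas2: "x \<in> {0..1} \<Longrightarrow> y \<in> {0..1} \<Longrightarrow> 0 \<le> q2 x y \<and> q2 x y \<le> 1"
  using feas unfolding feasible_def box01_def by auto
lemma feas11: "q1 1 1 + q2 1 1 \<le> 1"
  using feas unfolding feasible_def box01_def by auto

lemma ir1: "y \<in> {0..1} \<Longrightarrow> t1 0 y \<le> 0"
  using epir unfolding EPIR_def by force
lemma ir2: "x \<in> {0..1} \<Longrightarrow> t2 x 0 \<le> 0"
  using epir unfolding EPIR_def by force

definition G1 :: "nat \<Rightarrow> real \<Rightarrow> real" where
  "G1 j y = (if y \<in> {0..1} then t1 (s (Suc j)) y - t1 0 y else 0)"
definition G2 :: "nat \<Rightarrow> real \<Rightarrow> real" where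
  "G2 j x = (if x \<in> {0..1} then t2 x (s (Suc j)) - t2 x 0 else 0)"

lemma s_01: "j \<le> n \<Longrightarrow> s j \<in> {0..1}"
  using s_ge[of j] s_le1[of j] a0 by simp

lemma G1_bound: "j < n \<Longrightarrow> 0 \<le> G1 j y \<and> G1 j y \<le> 1"
proof (cases "y \<in> {0..1}")
  case True
  assume j: "j < n"
  have sj: "s (Suc j) \<in> {0..1}" using j s_01 by simp
  have "0 \<le> t1 (s (Suc j)) y - t1 0 y" using t1_mono[of 0 "s (Suc j)" y] sj True by simp
  moreover have "t1 (s (Suc j)) y - t1 0 y \<le> s (Suc j) * (q1 (s (Suc j)) y - q1 0 y)"
    using ic1[of 0 "s (Suc j)" y] sj True by simp
  moreover have "s (Suc j) * (q1 (s (Suc j)) y - q1 0 y) \<le> 1 * 1"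
  proof -
    have "q1 (s (Suc j)) y - q1 0 y \<le> 1" using feas1[of "s (Suc j)" y] feas1[of 0 y] sj True by simp
    moreover have "0 \<le> q1 (s (Suc j)) y - q1 0 y" using q1_mono[of 0 "s (Suc j)" y] sj True by simp
    ultimately show ?thesis using sj by (intro mult_mono) auto
  qed
  ultimately show ?thesis using True by (simp add: G1_def)
qed (auto simp: G1_def)

lemma G2_bound: "j < n \<Longrightarrow> 0 \<le> G2 j x \<and> G2 j x \<le> 1"
proof (cases "x \<in> {0..1}")
  case True
  assume j: "j < n"
  have sj: "s (Suc j) \<in> {0..1}" using j s_01 by simp
  have "0 \<le> t2 x (s (Suc j)) - t2 x 0" using t2_mono[of 0 "s (Suc j)" x] sj True by simp
  moreover have "t2 x (s (Suc j)) - t2 x 0 \<le> s (Suc j) * (q2 x (s (Suc j)) - q2 x 0)"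
    using ic2[of 0 "s (Suc j)" x] sj True by simp
  moreover have "s (Suc j) * (q2 x (s (Suc j)) - q2 x 0) \<le> 1 * 1"
  proof -
    have "q2 x (s (Suc j)) - q2 x 0 \<le> 1" using feas2[of x "s (Suc j)"] feas2[of x 0] sj True by simp
    moreover have "0 \<le> q2 x (s (Suc j)) - q2 x 0" using q2_mono[of 0 "s (Suc j)" x] sj True by simp
    ultimately show ?thesis using sj by (intro mult_mono) auto
  qed
  ultimately show ?thesis using True by (simp add: G2_def)
qed (auto simp: G2_def)

end

lemma sets_indepF: "sets (indepF \<alpha>) = sets (borel \<Otimes>\<^sub>M borel)"
  unfolding indepF_def by (rule sets_pair_measure_cong) simp_all

context Mech begin

lemma r_meas: "revenue M \<in> borel_measurable (borel \<Otimes>\<^sub>M borel)"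
proof -
  have "revenue M \<in> borel_measurable (indepF \<alpha>)" using rint by blast
  then show ?thesis using measurable_cong_sets[OF sets_indepF refl] by blast
qed

lemma r_sec1: "(\<lambda>y. revenue M (a, y)) \<in> borel_measurable borel"
  using measurable_compose[OF measurable_Pair1'[of a borel borel] r_meas] by simp

lemma r_sec2: "(\<lambda>x. revenue M (x, b)) \<in> borel_measurable borel"
  using measurable_compose[OF measurable_Pair2'[of b borel borel] r_meas] by simp

definition clamp :: "real \<Rightarrow> real" where "clamp y = max 0 (min 1 y)"

lemma clamp_01: "clamp y \<in> {0..1}" by (simp add: clamp_def)
lemma clamp_id: "y \<in> {0..1} \<Longrightarrow> clamp y = y" by (simp add: clamp_def)
lemma clamp_mono: "y \<le> y' \<Longrightarrow> clamp y \<le> clamp y'" by (simp add: clamp_def)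

lemma G1_meas:
  assumes j: "j < n"
  shows "G1 j \<in> borel_measurable borel"
proof -
  define a where "a = s (Suc j)"
  have a01: "a \<in> {0..1}" using j s_01 by (simp add: a_def)
  have m: "(\<lambda>y. t2 b (clamp y)) \<in> borel_measurable borel" if "b \<in> {0..1}" for b
  proof (rule borel_measurable_mono, rule monoI)
    fix y y' :: real assume "y \<le> y'"
    then show "t2 b (clamp y) \<le> t2 b (clamp y')"
      using t2_mono[of "clamp y" "clamp y'" b] clamp_01 clamp_mono that by blast
  qed
  have eq: "G1 j = (\<lambda>y. if y \<in> {0..1} then (revenue M (a, y) - t2 a (clamp y)) - (revenue M (0, y) - t2 0 (clamp y)) else 0)"
    by (rule ext) (auto simp: G1_def a_def revenue_def clamp_id)
  show ?thesis unfolding eq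
    by (intro measurable_If_set borel_measurable_diff r_sec1 m a01) auto
qed

lemma G2_meas:
  assumes j: "j < n"
  shows "G2 j \<in> borel_measurable borel"
proof -
  define a where "a = s (Suc j)"
  have a01: "a \<in> {0..1}" using j s_01 by (simp add: a_def)
  have m: "(\<lambda>x. t1 (clamp x) b) \<in> borel_measurable borel" if "b \<in> {0..1}" for b
  proof (rule borel_measurable_mono, rule monoI)
    fix y y' :: real assume "y \<le> y'"
    then show "t1 (clamp y) b \<le> t1 (clamp y') b"
      using t1_mono[of "clamp y" "clamp y'" b] clamp_01 clamp_mono that by blast
  qed
  have eq: "G2 j = (\<lambda>x. if x \<in> {0..1} then (revenue M (x, a) - t1 (clamp x) a) - (revenue M (x, 0) - t1 (clamp x) 0) else 0)"
    by (rule ext) (auto simp: G2_def a_def revenue_def clamp_id)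
  show ?thesis unfolding eq
    by (intro measurable_If_set borel_measurable_diff r_sec2 m a01) auto
qed

lemma G1_int: "j < n \<Longrightarrow> integrable (Fmeas \<alpha>) (G1 j)"
proof -
  assume j: "j < n"
  interpret F: prob_space "Fmeas \<alpha>" by (rule Fmeas_prob)
  show ?thesis
    by (rule F.integrable_const_bound[where B=1]) (use G1_bound[OF j] G1_meas[OF j] in auto)
qed

lemma G2_int: "j < n \<Longrightarrow> integrable (Fmeas \<alpha>) (G2 j)"
proof -
  assume j: "j < n"
  interpret F: prob_space "Fmeas \<alpha>" by (rule Fmeas_prob)
  show ?thesis
    by (rule F.integrable_const_bound[where B=1]) (use G2_bound[OF j] G2_meas[OF j] in auto)
qed

end

context Mech begin

abbreviation "w j \<equiv> Fcdf \<alpha> (s (Suc j)) - Fcdf \<alpha> (s j)"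

lemma step_coef: "m < n \<Longrightarrow> (\<alpha> / s m) * s (Suc m) \<le> \<alpha> + d"
proof -
  assume "m < n"
  have sp: "0 < s m" by (rule s_pos)
  have "(\<alpha> / s m) * s (Suc m) = \<alpha> + \<alpha> * d / s m" using sp by (simp add: s_Suc field_simps)
  moreover have "\<alpha> * d / s m \<le> d"
    using sp s_ge[of m] d_pos by (simp add: divide_le_eq mult_right_mono)
  ultimately show ?thesis by simp
qed

lemma bidder1_pt:
  assumes y: "y \<in> {0..1}"
  shows "(\<Sum>j<n. w j * G1 j y) \<le> (\<alpha> + d) * q1 1 y"
proof -
  define T where "T k = t1 (s k) y - t1 0 y" for k
  define Q where "Q k = q1 (s k) y" for k
  have eqs: "(\<Sum>j<n. w j * G1 j y) = (\<Sum>k<n. (Fcdf \<alpha> (s (Suc k)) - Fcdf \<alpha> (s k)) * T (Suc k))"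
    using y by (intro sum.cong) (auto simp: G1_def T_def)
  have "(\<Sum>k<n. (Fcdf \<alpha> (s (Suc k)) - Fcdf \<alpha> (s k)) * T (Suc k)) \<le> (\<alpha> + d) * Q n"
  proof (rule telescope[where Fv="\<lambda>k. Fcdf \<alpha> (s k)"])
    show "Fcdf \<alpha> (s 0) = 0" by (rule Fv_0)
    show "Fcdf \<alpha> (s n) = 1" by (rule Fv_n)
    fix m assume m: "m < n"
    have sm: "s m \<in> {0..1}" "s (Suc m) \<in> {0..1}" using m s_01 by auto
    have dQ: "0 \<le> Q (Suc m) - Q m"
      using q1_mono[of "s m" "s (Suc m)" y] sm y s_mono[of m "Suc m"] by (simp add: Q_def)
    have dT: "T (Suc m) - T m \<le> s (Suc m) * (Q (Suc m) - Q m)"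
      using ic1[of "s m" "s (Suc m)" y] sm y by (simp add: T_def Q_def)
    have c0: "0 \<le> \<alpha> / s m" using a0 s_pos[of m] by simp
    have "(1 - Fcdf \<alpha> (s m)) * (T (Suc m) - T m) = (\<alpha> / s m) * (T (Suc m) - T m)"
      using Fv_lt[OF m] by simp
    also have "\<dots> \<le> (\<alpha> / s m) * (s (Suc m) * (Q (Suc m) - Q m))"
      using dT c0 by (rule mult_left_mono)
    also have "\<dots> = ((\<alpha> / s m) * s (Suc m)) * (Q (Suc m) - Q m)" by simp
    also have "\<dots> \<le> (\<alpha> + d) * (Q (Suc m) - Q m)"
      using step_coef[OF m] dQ by (rule mult_right_mono)
    finally show "(1 - Fcdf \<alpha> (s m)) * (T (Suc m) - T m) \<le> (\<alpha> + d) * (Q (Suc m) - Q m)" .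
  next
    have a01: "\<alpha> \<in> {0..1}" using a0 a1 by simp
    have "T 0 \<le> \<alpha> * (q1 \<alpha> y - q1 0 y)" using ic1[of 0 \<alpha> y] a01 y by (simp add: T_def)
    also have "\<dots> \<le> \<alpha> * q1 \<alpha> y" using feas1[of 0 y] y a0 by (simp add: mult_left_mono)
    also have "\<dots> \<le> (\<alpha> + d) * q1 \<alpha> y" using feas1[of \<alpha> y] a01 y d_pos by (intro mult_right_mono) auto
    finally show "T 0 \<le> (\<alpha> + d) * Q 0" by (simp add: Q_def)
  qed
  then show ?thesis using eqs by (simp add: Q_def)
qed

lemma bidder2_pt:
  assumes x: "x \<in> {0..1}"
  shows "(\<Sum>j<n. w j * G2 j x) \<le> (\<alpha> + d) * q2 x 1"
proof -
  define T where "T k = t2 x (s k) - t2 x 0" for k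
  define Q where "Q k = q2 x (s k)" for k
  have eqs: "(\<Sum>j<n. w j * G2 j x) = (\<Sum>k<n. (Fcdf \<alpha> (s (Suc k)) - Fcdf \<alpha> (s k)) * T (Suc k))"
    using x by (intro sum.cong) (auto simp: G2_def T_def)
  have "(\<Sum>k<n. (Fcdf \<alpha> (s (Suc k)) - Fcdf \<alpha> (s k)) * T (Suc k)) \<le> (\<alpha> + d) * Q n"
  proof (rule telescope[where Fv="\<lambda>k. Fcdf \<alpha> (s k)"])
    show "Fcdf \<alpha> (s 0) = 0" by (rule Fv_0)
    show "Fcdf \<alpha> (s n) = 1" by (rule Fv_n)
    fix m assume m: "m < n"
    have sm: "s m \<in> {0..1}" "s (Suc m) \<in> {0..1}" using m s_01 by auto
    have dQ: "0 \<le> Q (Suc m) - Q m"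
      using q2_mono[of "s m" "s (Suc m)" x] sm x s_mono[of m "Suc m"] by (simp add: Q_def)
    have dT: "T (Suc m) - T m \<le> s (Suc m) * (Q (Suc m) - Q m)"
      using ic2[of "s m" "s (Suc m)" x] sm x by (simp add: T_def Q_def)
    have c0: "0 \<le> \<alpha> / s m" using a0 s_pos[of m] by simp
    have "(1 - Fcdf \<alpha> (s m)) * (T (Suc m) - T m) = (\<alpha> / s m) * (T (Suc m) - T m)"
      using Fv_lt[OF m] by simp
    also have "\<dots> \<le> (\<alpha> / s m) * (s (Suc m) * (Q (Suc m) - Q m))"
      using dT c0 by (rule mult_left_mono)
    also have "\<dots> = ((\<alpha> / s m) * s (Suc m)) * (Q (Suc m) - Q m)" by simp
    also have "\<dots> \<le> (\<alpha> + d) * (Q (Suc m) - Q m)"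
      using step_coef[OF m] dQ by (rule mult_right_mono)
    finally show "(1 - Fcdf \<alpha> (s m)) * (T (Suc m) - T m) \<le> (\<alpha> + d) * (Q (Suc m) - Q m)" .
  next
    have a01: "\<alpha> \<in> {0..1}" using a0 a1 by simp
    have "T 0 \<le> \<alpha> * (q2 x \<alpha> - q2 x 0)" using ic2[of 0 \<alpha> x] a01 x by (simp add: T_def)
    also have "\<dots> \<le> \<alpha> * q2 x \<alpha>" using feas2[of x 0] x a0 by (simp add: mult_left_mono)
    also have "\<dots> \<le> (\<alpha> + d) * q2 x \<alpha>" using feas2[of x \<alpha>] a01 x d_pos by (intro mult_right_mono) auto
    finally show "T 0 \<le> (\<alpha> + d) * Q 0" by (simp add: Q_def)
  qed
  then show ?thesis using eqs by (simp add: Q_def)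
qed

definition h1 :: "real \<Rightarrow> real" where "h1 y = 1 - (1 - q1 1 1) * indicator {1} y"
definition h2 :: "real \<Rightarrow> real" where "h2 x = 1 - (1 - q2 1 1) * indicator {1} x"

lemma bidder1_h: "(\<Sum>j<n. w j * G1 j y) \<le> (\<alpha> + d) * h1 y"
proof (cases "y \<in> {0..1}")
  case True
  have "q1 1 y \<le> h1 y" using feas1[of 1 y] True by (auto simp: h1_def indicator_def)
  then have "(\<alpha> + d) * q1 1 y \<le> (\<alpha> + d) * h1 y" using a0 d_pos by (intro mult_left_mono) auto
  then show ?thesis using bidder1_pt[OF True] by linarith
next
  case False
  then have "(\<Sum>j<n. w j * G1 j y) = 0" by (auto simp: G1_def)
  moreover have "0 \<le> h1 y" using feas1[of 1 1] by (auto simp: h1_def indicator_def)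
  ultimately show ?thesis using a0 d_pos by simp
qed

lemma bidder2_h: "(\<Sum>j<n. w j * G2 j x) \<le> (\<alpha> + d) * h2 x"
proof (cases "x \<in> {0..1}")
  case True
  have "q2 x 1 \<le> h2 x" using feas2[of x 1] True by (auto simp: h2_def indicator_def)
  then have "(\<alpha> + d) * q2 x 1 \<le> (\<alpha> + d) * h2 x" using a0 d_pos by (intro mult_left_mono) auto
  then show ?thesis using bidder2_pt[OF True] by linarith
next
  case False
  then have "(\<Sum>j<n. w j * G2 j x) = 0" by (auto simp: G2_def)
  moreover have "0 \<le> h2 x" using feas2[of 1 1] by (auto simp: h2_def indicator_def)
  ultimately show ?thesis using a0 d_pos by simp
qed

end

context Mech begin

lemma cell_sets[measurable]: "cell \<alpha> n j \<in> sets borel"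
  by (simp add: cell_def)

lemma int_h1: "(\<integral>y. h1 y \<partial>Fmeas \<alpha>) = 1 - (1 - q1 1 1) * \<alpha>"
proof -
  interpret F: prob_space "Fmeas \<alpha>" by (rule Fmeas_prob)
  have i: "integrable (Fmeas \<alpha>) (\<lambda>y. (1 - q1 1 1) * indicator {1} y :: real)"
    by (intro integrable_mult_right integrable_real_indicator) (auto simp: F.emeasure_eq_measure)
  have "(\<integral>y. h1 y \<partial>Fmeas \<alpha>) = (\<integral>y. 1 \<partial>Fmeas \<alpha>) - (\<integral>y. (1 - q1 1 1) * indicator {1} y \<partial>Fmeas \<alpha>)"
    unfolding h1_def by (rule Bochner_Integration.integral_diff) (use i in auto)
  also have "\<dots> = 1 - (1 - q1 1 1) * \<alpha>" using measure_Fmeas_1 F.prob_space by simp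
  finally show ?thesis .
qed

lemma int_h2: "(\<integral>y. h2 y \<partial>Fmeas \<alpha>) = 1 - (1 - q2 1 1) * \<alpha>"
proof -
  interpret F: prob_space "Fmeas \<alpha>" by (rule Fmeas_prob)
  have i: "integrable (Fmeas \<alpha>) (\<lambda>y. (1 - q2 1 1) * indicator {1} y :: real)"
    by (intro integrable_mult_right integrable_real_indicator) (auto simp: F.emeasure_eq_measure)
  have "(\<integral>y. h2 y \<partial>Fmeas \<alpha>) = (\<integral>y. 1 \<partial>Fmeas \<alpha>) - (\<integral>y. (1 - q2 1 1) * indicator {1} y \<partial>Fmeas \<alpha>)"
    unfolding h2_def by (rule Bochner_Integration.integral_diff) (use i in auto)
  also have "\<dots> = 1 - (1 - q2 1 1) * \<alpha>" using measure_Fmeas_1 F.prob_space by simp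
  finally show ?thesis .
qed

definition T1 :: "real \<Rightarrow> real \<Rightarrow> real" where
  "T1 x y = (\<Sum>j<n. indicator (cell \<alpha> n j) x * G1 j y)"
definition T2 :: "real \<Rightarrow> real \<Rightarrow> real" where
  "T2 x y = (\<Sum>j<n. indicator (cell \<alpha> n j) y * G2 j x)"

lemma T1_meas: "(\<lambda>(x, y). T1 x y) \<in> borel_measurable (borel \<Otimes>\<^sub>M borel)"
proof -
  have "(\<lambda>v. \<Sum>j<n. indicator (cell \<alpha> n j) (fst v) * G1 j (snd v)) \<in> borel_measurable (borel \<Otimes>\<^sub>M borel)"
  proof (rule borel_measurable_sum)
    fix j assume "j \<in> {..<n}"
    then have [measurable]: "G1 j \<in> borel_measurable borel" using G1_meas by simp
    show "(\<lambda>v. indicator (cell \<alpha> n j) (fst v) * G1 j (snd v)) \<in> borel_measurable (borel \<Otimes>\<^sub>M borel)"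
      by measurable
  qed
  then show ?thesis by (simp add: T1_def case_prod_beta')
qed

lemma T2_meas: "(\<lambda>(x, y). T2 x y) \<in> borel_measurable (borel \<Otimes>\<^sub>M borel)"
proof -
  have "(\<lambda>v. \<Sum>j<n. indicator (cell \<alpha> n j) (snd v) * G2 j (fst v)) \<in> borel_measurable (borel \<Otimes>\<^sub>M borel)"
  proof (rule borel_measurable_sum)
    fix j assume "j \<in> {..<n}"
    then have [measurable]: "G2 j \<in> borel_measurable borel" using G2_meas by simp
    show "(\<lambda>v. indicator (cell \<alpha> n j) (snd v) * G2 j (fst v)) \<in> borel_measurable (borel \<Otimes>\<^sub>M borel)"
      by measurable
  qed
  then show ?thesis by (simp add: T2_def case_prod_beta')
qed

lemma T1_bound: "\<bar>T1 x y\<bar> \<le> real n"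
proof -
  have "\<bar>T1 x y\<bar> \<le> (\<Sum>j<n. \<bar>indicator (cell \<alpha> n j) x * G1 j y\<bar>)"
    unfolding T1_def by (rule sum_abs)
  also have "\<dots> \<le> (\<Sum>j<n. (1::real))"
    by (intro sum_mono) (use G1_bound in \<open>auto simp: indicator_def\<close>)
  finally show ?thesis by simp
qed

lemma T2_bound: "\<bar>T2 x y\<bar> \<le> real n"
proof -
  have "\<bar>T2 x y\<bar> \<le> (\<Sum>j<n. \<bar>indicator (cell \<alpha> n j) y * G2 j x\<bar>)"
    unfolding T2_def by (rule sum_abs)
  also have "\<dots> \<le> (\<Sum>j<n. (1::real))"
    by (intro sum_mono) (use G2_bound in \<open>auto simp: indicator_def\<close>)
  finally show ?thesis by simp
qed

lemma T1_int: "integrable (indepF \<alpha>) (\<lambda>(x, y). T1 x y)"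
proof -
  interpret P: pair_prob_space "Fmeas \<alpha>" "Fmeas \<alpha>" by (rule pair_Fmeas)
  interpret Q: prob_space "indepF \<alpha>" unfolding indepF_def by (rule P.prob_space_axioms)
  show ?thesis
  proof (rule Q.integrable_const_bound[where B="real n"])
    show "AE x in indepF \<alpha>. norm ((\<lambda>(x, y). T1 x y) x) \<le> real n" using T1_bound by auto
    show "(\<lambda>(x, y). T1 x y) \<in> borel_measurable (indepF \<alpha>)"
      using T1_meas measurable_cong_sets[OF sets_indepF refl] by blast
  qed
qed

lemma T2_int: "integrable (indepF \<alpha>) (\<lambda>(x, y). T2 x y)"
proof -
  interpret P: pair_prob_space "Fmeas \<alpha>" "Fmeas \<alpha>" by (rule pair_Fmeas)
  interpret Q: prob_space "indepF \<alpha>" unfolding indepF_def by (rule P.prob_space_axioms)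
  show ?thesis
  proof (rule Q.integrable_const_bound[where B="real n"])
    show "AE x in indepF \<alpha>. norm ((\<lambda>(x, y). T2 x y) x) \<le> real n" using T2_bound by auto
    show "(\<lambda>(x, y). T2 x y) \<in> borel_measurable (indepF \<alpha>)"
      using T2_meas measurable_cong_sets[OF sets_indepF refl] by blast
  qed
qed

lemma T1_integral: "integral\<^sup>L (indepF \<alpha>) (\<lambda>(x, y). T1 x y) \<le> (\<alpha> + d) * (1 - (1 - q1 1 1) * \<alpha>)"
proof -
  interpret P: pair_prob_space "Fmeas \<alpha>" "Fmeas \<alpha>" by (rule pair_Fmeas)
  interpret F: prob_space "Fmeas \<alpha>" by (rule Fmeas_prob)
  have int: "integrable (Fmeas \<alpha> \<Otimes>\<^sub>M Fmeas \<alpha>) (case_prod T1)"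
    using T1_int by (simp add: indepF_def)
  have "integral\<^sup>L (indepF \<alpha>) (\<lambda>(x, y). T1 x y) = (\<integral>y. (\<integral>x. T1 x y \<partial>Fmeas \<alpha>) \<partial>Fmeas \<alpha>)"
    unfolding indepF_def using P.integral_snd[OF int] by simp
  also have "\<dots> = (\<integral>y. (\<Sum>j<n. w j * G1 j y) \<partial>Fmeas \<alpha>)"
    by (intro Bochner_Integration.integral_cong refl) (simp only: T1_def integral_cells)
  also have "\<dots> \<le> (\<integral>y. (\<alpha> + d) * h1 y \<partial>Fmeas \<alpha>)"
  proof (rule integral_mono)
    show "integrable (Fmeas \<alpha>) (\<lambda>y. \<Sum>j<n. w j * G1 j y)"
      by (intro Bochner_Integration.integrable_sum integrable_mult_right) (use G1_int in auto)
    show "integrable (Fmeas \<alpha>) (\<lambda>y. (\<alpha> + d) * h1 y)"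
      unfolding h1_def by (intro integrable_mult_right Bochner_Integration.integrable_diff integrable_real_indicator) (auto simp: P.M1.emeasure_eq_measure)
    show "\<And>y. y \<in> space (Fmeas \<alpha>) \<Longrightarrow> (\<Sum>j<n. w j * G1 j y) \<le> (\<alpha> + d) * h1 y"
      by (rule bidder1_h)
  qed
  also have "\<dots> = (\<alpha> + d) * (1 - (1 - q1 1 1) * \<alpha>)" using int_h1 by simp
  finally show ?thesis .
qed

lemma T2_integral: "integral\<^sup>L (indepF \<alpha>) (\<lambda>(x, y). T2 x y) \<le> (\<alpha> + d) * (1 - (1 - q2 1 1) * \<alpha>)"
proof -
  interpret P: pair_prob_space "Fmeas \<alpha>" "Fmeas \<alpha>" by (rule pair_Fmeas)
  interpret F: prob_space "Fmeas \<alpha>" by (rule Fmeas_prob)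
  have int: "integrable (Fmeas \<alpha> \<Otimes>\<^sub>M Fmeas \<alpha>) (case_prod T2)"
    using T2_int by (simp add: indepF_def)
  have "integral\<^sup>L (indepF \<alpha>) (\<lambda>(x, y). T2 x y) = (\<integral>x. (\<integral>y. T2 x y \<partial>Fmeas \<alpha>) \<partial>Fmeas \<alpha>)"
    unfolding indepF_def using P.integral_fst[OF int] by simp
  also have "\<dots> = (\<integral>x. (\<Sum>j<n. w j * G2 j x) \<partial>Fmeas \<alpha>)"
    by (intro Bochner_Integration.integral_cong refl) (simp only: T2_def integral_cells)
  also have "\<dots> \<le> (\<integral>x. (\<alpha> + d) * h2 x \<partial>Fmeas \<alpha>)"
  proof (rule integral_mono)
    show "integrable (Fmeas \<alpha>) (\<lambda>x. \<Sum>j<n. w j * G2 j x)"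
      by (intro Bochner_Integration.integrable_sum integrable_mult_right) (use G2_int in auto)
    show "integrable (Fmeas \<alpha>) (\<lambda>x. (\<alpha> + d) * h2 x)"
      unfolding h2_def by (intro integrable_mult_right Bochner_Integration.integrable_diff integrable_real_indicator) (auto simp: P.M1.emeasure_eq_measure)
    show "\<And>x. x \<in> space (Fmeas \<alpha>) \<Longrightarrow> (\<Sum>j<n. w j * G2 j x) \<le> (\<alpha> + d) * h2 x"
      by (rule bidder2_h)
  qed
  also have "\<dots> = (\<alpha> + d) * (1 - (1 - q2 1 1) * \<alpha>)" using int_h2 by simp
  finally show ?thesis .
qed

end

context Mech begin

lemma AE_box: "AE v in indepF \<alpha>. v \<in> {\<alpha><..1} \<times> {\<alpha><..1}"
proof -
  interpret P: pair_prob_space "Fmeas \<alpha>" "Fmeas \<alpha>" by (rule pair_Fmeas)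
  interpret Q: prob_space "indepF \<alpha>" unfolding indepF_def by (rule P.prob_space_axioms)
  have e1: "emeasure (Fmeas \<alpha>) {\<alpha><..1} = 1"
    using measure_Fmeas_box by (simp add: P.M1.emeasure_eq_measure)
  have "emeasure (indepF \<alpha>) ({\<alpha><..1} \<times> {\<alpha><..1}) = 1"
    unfolding indepF_def by (subst P.M1.emeasure_pair_measure_Times) (auto simp: e1)
  then have "Q.prob ({\<alpha><..1} \<times> {\<alpha><..1}) = 1" by (simp add: Q.emeasure_eq_measure)
  then show ?thesis by (rule Q.AE_prob_1)
qed

lemma rev_le_T:
  assumes "x \<in> {\<alpha><..1}" "y \<in> {\<alpha><..1}"
  shows "revenue M (x, y) \<le> T1 x y + T2 x y"
proof -
  have x01: "x \<in> {0..1}" and y01: "y \<in> {0..1}" using assms a0 by auto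
  obtain k where k: "k < n" "x \<in> cell \<alpha> n k"
    "\<And>g. (\<Sum>j<n. indicator (cell \<alpha> n j) x * g j) = (g k :: real)"
    using sum_cells[OF assms(1)] by blast
  obtain k' where k': "k' < n" "y \<in> cell \<alpha> n k'"
    "\<And>g. (\<Sum>j<n. indicator (cell \<alpha> n j) y * g j) = (g k' :: real)"
    using sum_cells[OF assms(2)] by blast
  have T1e: "T1 x y = t1 (s (Suc k)) y - t1 0 y"
    unfolding T1_def k(3) using y01 by (simp add: G1_def)
  have T2e: "T2 x y = t2 x (s (Suc k')) - t2 x 0"
    unfolding T2_def k'(3) using x01 by (simp add: G2_def)
  have sk: "s (Suc k) \<in> {0..1}" "s (Suc k') \<in> {0..1}" using k(1) k'(1) s_01 by auto
  have "x \<le> s (Suc k)" using k(2) by (simp add: cell_def)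
  then have "t1 x y \<le> t1 (s (Suc k)) y" using t1_mono[of x "s (Suc k)" y] x01 y01 sk by blast
  moreover have "y \<le> s (Suc k')" using k'(2) by (simp add: cell_def)
  then have "t2 x y \<le> t2 x (s (Suc k'))" using t2_mono[of y "s (Suc k')" x] x01 y01 sk by blast
  moreover have "t1 0 y \<le> 0" using ir1 y01 by blast
  moreover have "t2 x 0 \<le> 0" using ir2 x01 by blast
  ultimately show ?thesis using T1e T2e by (simp add: revenue_def)
qed

lemma main_bound: "U M (indepF \<alpha>) \<le> (\<alpha> + d) * (2 - \<alpha>)"
proof -
  have "U M (indepF \<alpha>) \<le> integral\<^sup>L (indepF \<alpha>) (\<lambda>v. (\<lambda>(x, y). T1 x y) v + (\<lambda>(x, y). T2 x y) v)"
    unfolding U_def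
  proof (rule integral_mono_AE)
    show "integrable (indepF \<alpha>) (revenue M)" by (rule rint)
    show "integrable (indepF \<alpha>) (\<lambda>v. (\<lambda>(x, y). T1 x y) v + (\<lambda>(x, y). T2 x y) v)"
      by (intro Bochner_Integration.integrable_add T1_int T2_int)
    show "AE v in indepF \<alpha>. revenue M v \<le> (\<lambda>(x, y). T1 x y) v + (\<lambda>(x, y). T2 x y) v"
      using AE_box by eventually_elim (auto intro: rev_le_T)
  qed
  also have "\<dots> = integral\<^sup>L (indepF \<alpha>) (\<lambda>(x, y). T1 x y) + integral\<^sup>L (indepF \<alpha>) (\<lambda>(x, y). T2 x y)"
    by (rule Bochner_Integration.integral_add) (rule T1_int, rule T2_int)
  also have "\<dots> \<le> (\<alpha> + d) * (1 - (1 - q1 1 1) * \<alpha>) + (\<alpha> + d) * (1 - (1 - q2 1 1) * \<alpha>)"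
    by (intro add_mono T1_integral T2_integral)
  also have "\<dots> = (\<alpha> + d) * (2 - 2 * \<alpha> + \<alpha> * (q1 1 1 + q2 1 1))" by (simp add: algebra_simps)
  also have "\<dots> \<le> (\<alpha> + d) * (2 - \<alpha>)"
  proof (rule mult_left_mono)
    have "\<alpha> * (q1 1 1 + q2 1 1) \<le> \<alpha> * 1" using feas11 a0 by (intro mult_left_mono) auto
    then show "2 - 2 * \<alpha> + \<alpha> * (q1 1 1 + q2 1 1) \<le> 2 - \<alpha>" by simp
    show "0 \<le> \<alpha> + d" using a0 d_pos by simp
  qed
  finally show ?thesis .
qed

end

context ERn begin

lemma low_step:
  assumes "Suc m < n"
  shows "(1 - Fcdf \<alpha> (s (Suc m))) * (s (Suc m) ^ 2 - s m ^ 2) \<ge> d * (2 * \<alpha> - d)"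
proof -
  define S where "S = s (Suc m)"
  have Sp: "\<alpha> \<le> S" "0 < S" using s_ge s_pos by (auto simp: S_def)
  have sm: "s m = S - d" using s_Suc[of m] by (simp add: S_def)
  have F: "1 - Fcdf \<alpha> (s (Suc m)) = \<alpha> / S" using Fv_lt[OF assms] by (simp add: S_def)
  have key: "\<alpha> * (S ^ 2 - (S - d) ^ 2) - d * (2 * \<alpha> - d) * S = d ^ 2 * (S - \<alpha>)"
    by (simp add: algebra_simps power2_eq_square)
  have "0 \<le> d ^ 2 * (S - \<alpha>)" using Sp by simp
  then have "d * (2 * \<alpha> - d) * S \<le> \<alpha> * (S ^ 2 - (S - d) ^ 2)" using key by linarith
  then have "d * (2 * \<alpha> - d) \<le> \<alpha> * (S ^ 2 - (S - d) ^ 2) / S" using Sp by (simp add: le_divide_eq)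
  then show ?thesis using F sm by (simp add: S_def)
qed

lemma spa_lower: "U SPA_UR (indepF \<alpha>) \<ge> \<alpha> ^ 2 + real (n - 1) * (d * (2 * \<alpha> - d))"
proof -
  interpret F: prob_space "Fmeas \<alpha>" by (rule Fmeas_prob)
  define L where "L x = (\<Sum>j<n. indicator (cell \<alpha> n j) x * s j ^ 2)" for x
  have "\<alpha> ^ 2 + real (n - 1) * (d * (2 * \<alpha> - d)) \<le> (\<Sum>j<n. (Fcdf \<alpha> (s (Suc j)) - Fcdf \<alpha> (s j)) * s j ^ 2)"
    using telescope_low[where Fv="\<lambda>k. Fcdf \<alpha> (s k)" and x=s and n=n, OF Fv_0 Fv_n n0 low_step] by simp
  also have "\<dots> = (\<integral>x. L x \<partial>Fmeas \<alpha>)" unfolding L_def by (rule integral_cells[symmetric])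
  also have "\<dots> \<le> (\<integral>x. x ^ 2 \<partial>Fmeas \<alpha>)"
  proof (rule integral_mono_AE)
    show "integrable (Fmeas \<alpha>) L" unfolding L_def
      by (intro Bochner_Integration.integrable_sum integrable_mult_left integrable_real_indicator)
         (auto simp: cell_def F.emeasure_eq_measure)
    show "integrable (Fmeas \<alpha>) (\<lambda>x. x ^ 2)"
    proof (rule F.integrable_const_bound[where B=1])
      show "AE x in Fmeas \<alpha>. norm (x ^ 2) \<le> 1"
        using AE_Fmeas by eventually_elim (use a0 in \<open>auto simp: abs_le_square_iff power_le_one\<close>)
    qed simp
    show "AE x in Fmeas \<alpha>. L x \<le> x ^ 2"
      using AE_Fmeas
    proof eventually_elim
      fix x assume x: "x \<in> {\<alpha><..1}"
      obtain k where k: "k < n" "x \<in> cell \<alpha> n k"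
        "\<And>g. (\<Sum>j<n. indicator (cell \<alpha> n j) x * g j) = (g k :: real)"
        using sum_cells[OF x] by blast
      have "L x = s k ^ 2" unfolding L_def k(3) ..
      moreover have "s k \<le> x" "0 \<le> s k" using k(2) s_pos[of k] by (auto simp: cell_def)
      ultimately show "L x \<le> x ^ 2" by (simp add: power_mono)
    qed
  qed
  also have "\<dots> = U SPA_UR (indepF \<alpha>)" using U_SPA_PiF[OF indepF_PiF] by simp
  finally show ?thesis .
qed

end

lemma final_bound:
  fixes \<alpha> :: real and M :: mechanism
  assumes a: "0 < \<alpha>" "\<alpha> < 1"
    and m: "feasible M" "DSIC M" "EPIR M" "integrable (indepF \<alpha>) (revenue M)"
  shows "U M (indepF \<alpha>) \<le> U SPA_UR (indepF \<alpha>)"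
proof (rule field_le_epsilon)
  fix e :: real assume e: "0 < e"
  obtain N where N: "3 * (1 - \<alpha>) / e < real N" using reals_Archimedean2 by blast
  interpret Mech \<alpha> "Suc N" M using a m by unfold_locales auto
  define dd where "dd = gstep \<alpha> (Suc N)"
  have ub: "U M (indepF \<alpha>) \<le> (\<alpha> + dd) * (2 - \<alpha>)" using main_bound by (simp add: dd_def)
  have lb: "U SPA_UR (indepF \<alpha>) \<ge> \<alpha> ^ 2 + real N * (dd * (2 * \<alpha> - dd))" using spa_lower by (simp add: dd_def)
  have nd': "real (Suc N) * dd = 1 - \<alpha>" using nd by (simp add: dd_def)
  then have Nd: "real N * dd = 1 - \<alpha> - dd" by (simp add: algebra_simps)
  have eqN: "real N * (dd * (2 * \<alpha> - dd)) = (1 - \<alpha> - dd) * (2 * \<alpha> - dd)"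
    using Nd by (metis mult.assoc)
  have lb': "U SPA_UR (indepF \<alpha>) \<ge> \<alpha> ^ 2 + (1 - \<alpha> - dd) * (2 * \<alpha> - dd)" using lb eqN by linarith
  have diff: "(\<alpha> + dd) * (2 - \<alpha>) - (\<alpha> ^ 2 + (1 - \<alpha> - dd) * (2 * \<alpha> - dd)) = 3 * dd - dd ^ 2"
    by (simp add: algebra_simps power2_eq_square)
  have "3 * (1 - \<alpha>) < e * real (Suc N)" using N e by (simp add: divide_less_eq algebra_simps)
  then have "3 * dd * real (Suc N) < e * real (Suc N)" using nd' by (simp add: algebra_simps)
  then have "3 * dd < e" by simp
  moreover have "0 \<le> dd ^ 2" by simp
  ultimately show "U M (indepF \<alpha>) \<le> U SPA_UR (indepF \<alpha>) + e" using ub lb' diff by linarith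
qed

theorem corollary1:
  fixes \<alpha> :: real
  assumes "0 < \<alpha>" and "\<alpha> < 1"
  shows "(\<forall>\<pi>\<in>PiF \<alpha>. U SPA_UR \<pi> \<ge> U SPA_UR (indepF \<alpha>))
       \<and> (\<forall>M::mechanism. feasible M \<and> DSIC M \<and> EPIR M
            \<and> integrable (indepF \<alpha>) (revenue M)
            \<longrightarrow> U M (indepF \<alpha>) \<le> U SPA_UR (indepF \<alpha>))"
proof (intro conjI ballI allI impI)
  interpret ER \<alpha> using assms by unfold_locales
  fix \<pi> assume "\<pi> \<in> PiF \<alpha>"
  then show "U SPA_UR \<pi> \<ge> U SPA_UR (indepF \<alpha>)"
    using U_SPA_PiF[of \<pi> \<alpha>] U_SPA_PiF[OF indepF_PiF] by simp
next
  fix M :: mechanism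
  assume "feasible M \<and> DSIC M \<and> EPIR M \<and> integrable (indepF \<alpha>) (revenue M)"
  then show "U M (indepF \<alpha>) \<le> U SPA_UR (indepF \<alpha>)"
    using final_bound[OF assms] by blast
qed


end
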